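(* Let $(A,\circ,[\cdot,\cdot])$ be a dual pre-Poisson algebra and $(B,\diamond,\odot)$ a pre-Poisson algebra. Define bilinear operations on $A\otimes B$ by $$(x\otimes a)\diamond_1(y\otimes b)=(x\circ y)\otimes(a\diamond b),\qquad (x\otimes a)\diamond_2(y\otimes b)=[x,y]\otimes(a\odot b),$$ for $x,y\in A$, $a,b\in B$. Then $(A\otimes B,\diamond_1)$ and $(A\otimes B,\diamond_2)$ are pre-Lie algebras, $(A\otimes B,\diamond_1,\diamond_2)$ is a compatible pre-Lie algebra, and $(A\otimes B,\{\cdot,\cdot\}_1,\{\cdot,\cdot\}_2)$ with $\{X,Y\}_k=X\diamond_k Y-Y\diamond_k X$ ($k=1,2$) is a compatible Lie algebra.
   Context: Field $\mathbb{F}$ of characteristic $0$. A dual pre-Poisson algebra: $x\circ(y\circ z)=(x\circ y)\circ z=(y\circ x)\circ z$; $[x,[y,z]]=[[x,y],z]+[y,[x,z]]$; $[x,y\circ z]=[x,y]\circ z+y\circ[x,z]$; $[x\circ y,z]=x\circ[y,z]+y\circ[x,z]$; $[x,y]\circ z=-[y,x]\circ z$. A pre-Lie algebra $(A,\diamond)$: $x\diamond(y\diamond z)-(x\diamond y)\diamond z=y\diamond(x\diamond z)-(y\diamond x)\diamond z$. A pre-Poisson algebra $(B,\diamond,\odot)$: $(B,\diamond)$ pre-Lie; $(B,\odot)$ Zinbiel, i.e. $x\odot(y\odot z)=(x\odot y+y\odot x)\odot z$; and $(x\diamond y-y\diamond x)\odot z=x\diamond(y\odot z)-y\odot(x\diamond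 z)$, $(x\odot y+y\odot x)\diamond z=x\odot(y\diamond z)+y\odot(x\diamond z)$. A compatible pre-Lie algebra $(A,\diamond,\diamond')$ consists of two pre-Lie products such that $k_1\,x\diamond y+k_2\,x\diamond' y$ is a pre-Lie product for all $k_1,k_2\in\mathbb{F}$. A compatible Lie algebra $(A,\{\cdot,\cdot\},\{\cdot,\cdot\}')$ consists of two Lie brackets such that $k_1\{\cdot,\cdot\}+k_2\{\cdot,\cdot\}'$ is a Lie bracket for all $k_1,k_2\in\mathbb{F}$. *)

theory Defs
  imports Complex_Main
begin

definition bilinear_map ::
  "('k::field \<Rightarrow> 'a::ab_group_add \<Rightarrow> 'a) \<Rightarrow> ('k \<Rightarrow> 'b::ab_group_add \<Rightarrow> 'b)
   \<Rightarrow> ('k \<Rightarrow> 'c::ab_group_add \<Rightarrow> 'c) \<Rightarrow> ('a \<Rightarrow> 'b \<Rightarrow> 'c) \<Rightarrow> bool" where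
  "bilinear_map sA sB sC f \<longleftrightarrow>
     (\<forall>y. Vector_Spaces.linear sA sC (\<lambda>x. f x y)) \<and> (\<forall>x. Vector_Spaces.linear sB sC (f x))"

abbreviation bilinear_op :: "('k::field \<Rightarrow> 'a::ab_group_add \<Rightarrow> 'a) \<Rightarrow> ('a \<Rightarrow> 'a \<Rightarrow> 'a) \<Rightarrow> bool" where
  "bilinear_op s m \<equiv> bilinear_map s s s m"

text \<open>tp : A \<times> B \<rightarrow> T exhibits T as the tensor product A \<otimes> B, with x \<otimes> a = tp x a.
  Characterization: tp bilinear, pure tensors span T, and every bilinear form on A \<times> B
  factors through a linear functional on T (uniqueness is automatic from spanning).\<close>
definition is_tensor_product ::
  "('k::field \<Rightarrow> 'a::ab_group_add \<Rightarrow> 'a) \<Rightarrow> ('k \<Rightarrow> 'b::ab_group_add \<Rightarrow> 'b)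
   \<Rightarrow> ('k \<Rightarrow> 't::ab_group_add \<Rightarrow> 't) \<Rightarrow> ('a \<Rightarrow> 'b \<Rightarrow> 't) \<Rightarrow> bool" where
  "is_tensor_product sA sB sT tp \<longleftrightarrow>
     vector_space sA \<and> vector_space sB \<and> vector_space sT \<and>
     bilinear_map sA sB sT tp \<and>
     module.span sT {tp x a | x a. True} = UNIV \<and>
     (\<forall>\<phi>. bilinear_map sA sB ((*) :: 'k \<Rightarrow> 'k \<Rightarrow> 'k) \<phi> \<longrightarrow>
        (\<exists>h. Vector_Spaces.linear sT ((*) :: 'k \<Rightarrow> 'k \<Rightarrow> 'k) h \<and> (\<forall>x a. h (tp x a) = \<phi> x a)))"

definition pre_Lie :: "('k::field \<Rightarrow> 'a::ab_group_add \<Rightarrow> 'a) \<Rightarrow> ('a \<Rightarrow> 'a \<Rightarrow> 'a) \<Rightarrow> bool" where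
  "pre_Lie s m \<longleftrightarrow> vector_space s \<and> bilinear_op s m \<and>
     (\<forall>x y z. m x (m y z) - m (m x y) z = m y (m x z) - m (m y x) z)"

definition Lie_algebra :: "('k::field \<Rightarrow> 'a::ab_group_add \<Rightarrow> 'a) \<Rightarrow> ('a \<Rightarrow> 'a \<Rightarrow> 'a) \<Rightarrow> bool" where
  "Lie_algebra s b \<longleftrightarrow> vector_space s \<and> bilinear_op s b \<and>
     (\<forall>x. b x x = 0) \<and>
     (\<forall>x y z. b x (b y z) + b y (b z x) + b z (b x y) = 0)"

definition compatible_pre_Lie ::
  "('k::field \<Rightarrow> 'a::ab_group_add \<Rightarrow> 'a) \<Rightarrow> ('a \<Rightarrow> 'a \<Rightarrow> 'a) \<Rightarrow> ('a \<Rightarrow> 'a \<Rightarrow> 'a) \<Rightarrow> bool" where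
  "compatible_pre_Lie s m1 m2 \<longleftrightarrow> pre_Lie s m1 \<and> pre_Lie s m2 \<and>
     (\<forall>k1 k2. pre_Lie s (\<lambda>x y. s k1 (m1 x y) + s k2 (m2 x y)))"

definition compatible_Lie ::
  "('k::field \<Rightarrow> 'a::ab_group_add \<Rightarrow> 'a) \<Rightarrow> ('a \<Rightarrow> 'a \<Rightarrow> 'a) \<Rightarrow> ('a \<Rightarrow> 'a \<Rightarrow> 'a) \<Rightarrow> bool" where
  "compatible_Lie s b1 b2 \<longleftrightarrow> Lie_algebra s b1 \<and> Lie_algebra s b2 \<and>
     (\<forall>k1 k2. Lie_algebra s (\<lambda>x y. s k1 (b1 x y) + s k2 (b2 x y)))"

definition dual_pre_Poisson ::
  "('k::field \<Rightarrow> 'a::ab_group_add \<Rightarrow> 'a) \<Rightarrow> ('a \<Rightarrow> 'a \<Rightarrow> 'a) \<Rightarrow> ('a \<Rightarrow> 'a \<Rightarrow> 'a) \<Rightarrow> bool" where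
  "dual_pre_Poisson s c br \<longleftrightarrow> vector_space s \<and> bilinear_op s c \<and> bilinear_op s br \<and>
     (\<forall>x y z. c x (c y z) = c (c x y) z \<and> c (c x y) z = c (c y x) z) \<and>
     (\<forall>x y z. br x (br y z) = br (br x y) z + br y (br x z)) \<and>
     (\<forall>x y z. br x (c y z) = c (br x y) z + c y (br x z)) \<and>
     (\<forall>x y z. br (c x y) z = c x (br y z) + c y (br x z)) \<and>
     (\<forall>x y z. c (br x y) z = - c (br y x) z)"

definition pre_Poisson ::
  "('k::field \<Rightarrow> 'b::ab_group_add \<Rightarrow> 'b) \<Rightarrow> ('b \<Rightarrow> 'b \<Rightarrow> 'b) \<Rightarrow> ('b \<Rightarrow> 'b \<Rightarrow> 'b) \<Rightarrow> bool" where
  "pre_Poisson s dm od \<longleftrightarrow> pre_Lie s dm \<and> bilinear_op s od \<and>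
     (\<forall>x y z. od x (od y z) = od (od x y + od y x) z) \<and>
     (\<forall>x y z. od (dm x y - dm y x) z = dm x (od y z) - od y (dm x z)) \<and>
     (\<forall>x y z. dm (od x y + od y x) z = od x (dm y z) + od y (dm x z))"

end

theory Submission
  imports Defs
begin

lemma additive_rules:
  fixes f :: "'a::ab_group_add \<Rightarrow> 'b::ab_group_add"
  assumes "\<And>x y. f (x + y) = f x + f y"
  shows "f (x - y) = f x - f y" "f (- x) = - f x" "f 0 = 0"
proof -
  interpret additive f by standard (rule assms)
  show "f (x - y) = f x - f y" by (rule diff)
  show "f (- x) = - f x" by (rule minus)
  show "f 0 = 0" by (rule zero)
qed

lemma bil_D:
  assumes "bilinear_map s1 s2 s3 m"
  shows "m (x + y) z = m x z + m y z" "m (s1 c x) z = s3 c (m x z)"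
    "m u (v + w) = m u v + m u w" "m u (s2 c v) = s3 c (m u v)"
  using assms by (auto simp: bilinear_map_def Vector_Spaces.linear_iff)

lemma bil_D2:
  assumes "bilinear_map s1 s2 s3 m"
  shows "m (x - y) z = m x z - m y z" "m (- x) z = - m x z" "m 0 z = 0"
    "m u (v - w) = m u v - m u w" "m u (- v) = - m u v" "m u 0 = 0"
proof -
  have a: "\<And>x y. m (x + y) z = m x z + m y z" using bil_D(1)[OF assms] .
  have b: "\<And>v w. m u (v + w) = m u v + m u w" using bil_D(3)[OF assms] .
  show "m (x - y) z = m x z - m y z" "m (- x) z = - m x z" "m 0 z = 0"
    using additive_rules[of "\<lambda>x. m x z", OF a] by auto
  show "m u (v - w) = m u v - m u w" "m u (- v) = - m u v" "m u 0 = 0"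
    using additive_rules[of "m u", OF b] by auto
qed

lemma bil_I:
  assumes "vector_space s1" "vector_space s2" "vector_space s3"
    "\<And>x y z. m (x + y) z = m x z + m y z" "\<And>c x z. m (s1 c x) z = s3 c (m x z)"
    "\<And>x y z. m x (y + z) = m x y + m x z" "\<And>c x y. m x (s2 c y) = s3 c (m x y)"
  shows "bilinear_map s1 s2 s3 m"
  using assms by (auto simp: bilinear_map_def Vector_Spaces.linear_iff)

definition assoc :: "('a \<Rightarrow> 'a \<Rightarrow> 'a) \<Rightarrow> ('a \<Rightarrow> 'a \<Rightarrow> 'a) \<Rightarrow> 'a \<Rightarrow> 'a \<Rightarrow> 'a \<Rightarrow> 'a::ab_group_add" where
  "assoc m1 m2 x y z = m1 x (m2 y z) - m1 (m2 x y) z"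

lemma zero_bil:
  fixes s :: "'k::field \<Rightarrow> 'a::ab_group_add \<Rightarrow> 'a"
  assumes vs: "vector_space s" shows "bilinear_op s (\<lambda>x y. 0)"
proof -
  interpret v: vector_space s by (rule vs)
  show ?thesis by (rule bil_I) (auto simp: vs)
qed

lemma assoc_lin:
  fixes s :: "'k::field \<Rightarrow> 'a::ab_group_add \<Rightarrow> 'a"
  assumes vs: "vector_space s" and b1: "bilinear_op s m1" and b2: "bilinear_op s m2"
  shows "Vector_Spaces.linear s s (\<lambda>X. assoc m1 m2 X Y Z)" "Vector_Spaces.linear s s (\<lambda>Y. assoc m1 m2 X Y Z)"
    "Vector_Spaces.linear s s (\<lambda>Z. assoc m1 m2 X Y Z)"
proof -
  interpret v: vector_space s by (rule vs)
  note r = bil_D[OF b1] bil_D[OF b2] bil_D2[OF b1] bil_D2[OF b2]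
  show "Vector_Spaces.linear s s (\<lambda>X. assoc m1 m2 X Y Z)" "Vector_Spaces.linear s s (\<lambda>Y. assoc m1 m2 X Y Z)"
    "Vector_Spaces.linear s s (\<lambda>Z. assoc m1 m2 X Y Z)"
    by (auto simp: Vector_Spaces.linear_iff vs assoc_def r algebra_simps)
qed

lemma ext_sym:
  fixes s :: "'k::field \<Rightarrow> 'a::ab_group_add \<Rightarrow> 'a"
  assumes vs: "vector_space s" and sp: "module.span s G = UNIV"
    and b1: "bilinear_op s m1" and b2: "bilinear_op s m2"
    and b3: "bilinear_op s m3" and b4: "bilinear_op s m4"
    and g: "\<And>X Y Z. X \<in> G \<Longrightarrow> Y \<in> G \<Longrightarrow> Z \<in> G \<Longrightarrow>
        assoc m1 m2 X Y Z + assoc m3 m4 X Y Z = assoc m1 m2 Y X Z + assoc m3 m4 Y X Z"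
  shows "assoc m1 m2 X Y Z + assoc m3 m4 X Y Z = assoc m1 m2 Y X Z + assoc m3 m4 Y X Z"
proof -
  interpret v: vector_space s by (rule vs)
  note r = bil_D[OF b1] bil_D[OF b2] bil_D2[OF b1] bil_D2[OF b2]
    bil_D[OF b3] bil_D[OF b4] bil_D2[OF b3] bil_D2[OF b4]
  define F where "F X Y Z = assoc m1 m2 X Y Z + assoc m3 m4 X Y Z - (assoc m1 m2 Y X Z + assoc m3 m4 Y X Z)" for X Y Z
  have lin1: "Vector_Spaces.linear s s (\<lambda>X. F X Y Z)" for Y Z
    unfolding F_def
    by (auto simp: Vector_Spaces.linear_iff vs F_def assoc_def r algebra_simps)
  have lin2: "Vector_Spaces.linear s s (\<lambda>Y. F X Y Z)" for X Z
    unfolding F_def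
    by (auto simp: Vector_Spaces.linear_iff vs F_def assoc_def r algebra_simps)
  have lin3: "Vector_Spaces.linear s s (\<lambda>Z. F X Y Z)" for X Y
    unfolding F_def
    by (auto simp: Vector_Spaces.linear_iff vs F_def assoc_def r algebra_simps)
  have z: "\<And>f x. Vector_Spaces.linear s s f \<Longrightarrow> (\<And>g. g \<in> G \<Longrightarrow> f g = 0) \<Longrightarrow> f x = 0"
    using module_hom.eq_0_on_span sp by (metis UNIV_I module_hom_iff_linear)
  have h0: "F X Y Z = 0" if "X \<in> G" "Y \<in> G" "Z \<in> G" for X Y Z
    using g[OF that] by (simp add: F_def)
  have h1: "F X Y Z = 0" if "Y \<in> G" "Z \<in> G" for X Y Z
    using z[OF lin1] h0 that by blast
  have h2: "F X Y Z = 0" if "Z \<in> G" for X Y Z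
    using z[OF lin2] h1 that by blast
  have h3: "F X Y Z = 0" for X Y Z
    using z[OF lin3] h2 by blast
  show ?thesis using h3[of X Y Z] by (simp add: F_def)
qed

lemma comb:
  fixes s :: "'k::field \<Rightarrow> 'a::ab_group_add \<Rightarrow> 'a"
  assumes vs: "vector_space s" and b1: "bilinear_op s m1" and b2: "bilinear_op s m2"
    and s1: "\<And>X Y Z. assoc m1 m1 X Y Z = assoc m1 m1 Y X Z"
    and s2: "\<And>X Y Z. assoc m2 m2 X Y Z = assoc m2 m2 Y X Z"
    and s12: "\<And>X Y Z. assoc m1 m2 X Y Z + assoc m2 m1 X Y Z = assoc m1 m2 Y X Z + assoc m2 m1 Y X Z"
  shows "pre_Lie s (\<lambda>x y. s k1 (m1 x y) + s k2 (m2 x y))"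
proof -
  interpret v: vector_space s by (rule vs)
  note r = bil_D[OF b1] bil_D[OF b2] bil_D2[OF b1] bil_D2[OF b2]
  define m where "m = (\<lambda>x y. s k1 (m1 x y) + s k2 (m2 x y))"
  have e: "assoc m m X Y Z = s (k1*k1) (assoc m1 m1 X Y Z) + s (k1*k2) (assoc m1 m2 X Y Z + assoc m2 m1 X Y Z)
     + s (k2*k2) (assoc m2 m2 X Y Z)" for X Y Z
    by (simp add: m_def assoc_def r algebra_simps)
  have bm: "bilinear_op s m"
    by (rule bil_I) (auto simp: vs m_def r algebra_simps)
  have "assoc m m X Y Z = assoc m m Y X Z" for X Y Z
    using e[of X Y Z] e[of Y X Z] s1 s2 s12 by simp
  then have "pre_Lie s m"
    unfolding pre_Lie_def assoc_def using vs bm by blast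
  then show ?thesis by (simp add: m_def)
qed

lemma preLie_Lie:
  fixes s :: "'k::field \<Rightarrow> 'a::ab_group_add \<Rightarrow> 'a"
  assumes p: "pre_Lie s m"
  shows "Lie_algebra s (\<lambda>x y. m x y - m y x)"
proof -
  have vs: "vector_space s" and b: "bilinear_op s m"
    and id: "\<And>x y z. assoc m m x y z = assoc m m y x z"
    using p unfolding pre_Lie_def assoc_def by blast+
  interpret v: vector_space s by (rule vs)
  note r = bil_D[OF b] bil_D2[OF b]
  have bb: "bilinear_op s (\<lambda>x y. m x y - m y x)"
    by (rule bil_I) (auto simp: vs r algebra_simps)
  have j: "(m x (m y z - m z y) - m (m y z - m z y) x) + (m y (m z x - m x z) - m (m z x - m x z) y)
     + (m z (m x y - m y x) - m (m x y - m y x) z) =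
     (assoc m m x y z - assoc m m y x z) + (assoc m m y z x - assoc m m z y x)
     + (assoc m m z x y - assoc m m x z y)" for x y z
    by (simp add: assoc_def r algebra_simps)
  show ?thesis unfolding Lie_algebra_def using vs bb j id by simp
qed


theorem proposition2p20:
  fixes sA :: "'k::field_char_0 \<Rightarrow> 'a::ab_group_add \<Rightarrow> 'a"
    and sB :: "'k \<Rightarrow> 'b::ab_group_add \<Rightarrow> 'b"
    and sT :: "'k \<Rightarrow> 't::ab_group_add \<Rightarrow> 't"
    and circ br :: "'a \<Rightarrow> 'a \<Rightarrow> 'a"
    and dm od :: "'b \<Rightarrow> 'b \<Rightarrow> 'b"
    and tp :: "'a \<Rightarrow> 'b \<Rightarrow> 't"
    and d1 d2 :: "'t \<Rightarrow> 't \<Rightarrow> 't"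
  assumes A: "dual_pre_Poisson sA circ br"
    and B: "pre_Poisson sB dm od"
    and T: "is_tensor_product sA sB sT tp"
    and d1_bil: "bilinear_op sT d1"
    and d2_bil: "bilinear_op sT d2"
    and d1_def: "\<And>x y a b. d1 (tp x a) (tp y b) = tp (circ x y) (dm a b)"
    and d2_def: "\<And>x y a b. d2 (tp x a) (tp y b) = tp (br x y) (od a b)"
  shows "pre_Lie sT d1 \<and> pre_Lie sT d2 \<and> compatible_pre_Lie sT d1 d2 \<and>
         compatible_Lie sT (\<lambda>X Y. d1 X Y - d1 Y X) (\<lambda>X Y. d2 X Y - d2 Y X)"
proof -
  have vsT: "vector_space sT" and tpb: "bilinear_map sA sB sT tp"
    and sp: "module.span sT {tp x a | x a. True} = UNIV"
    using T unfolding is_tensor_product_def by blast+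
  have cb: "bilinear_op sA circ" and bb: "bilinear_op sA br"
    and A1: "\<And>x y z. circ x (circ y z) = circ (circ x y) z"
    and A2: "\<And>x y z. circ (circ x y) z = circ (circ y x) z"
    and A3: "\<And>x y z. br x (br y z) = br (br x y) z + br y (br x z)"
    and A4: "\<And>x y z. br x (circ y z) = circ (br x y) z + circ y (br x z)"
    and A5: "\<And>x y z. br (circ x y) z = circ x (br y z) + circ y (br x z)"
    and A6: "\<And>x y z. circ (br x y) z = - circ (br y x) z"
    using A unfolding dual_pre_Poisson_def by blast+
  have dmP: "pre_Lie sB dm" and ob: "bilinear_op sB od"
    and B2: "\<And>x y z. od x (od y z) = od (od x y + od y x) z"
    and B3: "\<And>x y z. od (dm x y - dm y x) z = dm x (od y z) - od y (dm x z)"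
    and B4: "\<And>x y z. dm (od x y + od y x) z = od x (dm y z) + od y (dm x z)"
    using B unfolding pre_Poisson_def by blast+
  have db: "bilinear_op sB dm"
    and B1: "\<And>x y z. dm x (dm y z) - dm (dm x y) z = dm y (dm x z) - dm (dm y x) z"
    using dmP unfolding pre_Lie_def by blast+
  note tpr = bil_D[OF tpb] bil_D2[OF tpb]
  note obr = bil_D[OF ob] bil_D2[OF ob]
  note dbr = bil_D[OF db] bil_D2[OF db]
  let ?G = "{tp x a | x a. True}"
  have zb: "bilinear_op sT (\<lambda>x y. 0)" by (rule zero_bil[OF vsT])
  have z0: "assoc (\<lambda>x y. 0) (\<lambda>x y. 0) X Y Z = (0::'t)" for X Y Z by (simp add: assoc_def)
  have p1: "assoc d1 d1 X Y Z = assoc d1 d1 Y X Z" if GG: "X \<in> ?G" "Y \<in> ?G" "Z \<in> ?G" for X Y Z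
  proof -
    obtain x a y b z c where X: "X = tp x a" and Y: "Y = tp y b" and Z: "Z = tp z c"
      using GG by blast
    have e1: "circ y (circ x z) = circ (circ x y) z" using A1 A2 by metis
    have "tp (circ (circ x y) z) (dm a (dm b c)) - tp (circ (circ x y) z) (dm (dm a b) c)
       = tp (circ (circ x y) z) (dm b (dm a c)) - tp (circ (circ x y) z) (dm (dm b a) c)"
      by (metis B1 tpr(8))
    then show ?thesis unfolding X Y Z assoc_def d1_def A1 e1 A2[of y x z] .
  qed
  have P1: "assoc d1 d1 X Y Z = assoc d1 d1 Y X Z" for X Y Z
    using ext_sym[OF vsT sp d1_bil d1_bil zb zb, of X Y Z] p1 z0 by simp
  have p2: "assoc d2 d2 X Y Z = assoc d2 d2 Y X Z" if GG: "X \<in> ?G" "Y \<in> ?G" "Z \<in> ?G" for X Y Z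
  proof -
    obtain x a y b z c where X: "X = tp x a" and Y: "Y = tp y b" and Z: "Z = tp z c"
      using GG by blast
    have n: "br (br y x) z = - br (br x y) z"
    proof -
      have "br (br x y) z + br (br y x) z = 0"
        using A3[of x y z] A3[of y x z] by (simp add: algebra_simps)
      then show ?thesis by (metis minus_unique)
    qed
    have z1: "od a (od b c) = od (od a b) c + od (od b a) c" using B2 obr by simp
    have z2: "od b (od a c) = od (od b a) c + od (od a b) c" using B2 obr by simp
    show ?thesis unfolding X Y Z assoc_def d2_def A3[of x y z] n z1 z2
      by (simp add: tpr algebra_simps)
  qed
  have P2: "assoc d2 d2 X Y Z = assoc d2 d2 Y X Z" for X Y Z
    using ext_sym[OF vsT sp d2_bil d2_bil zb zb, of X Y Z] p2 z0 by simp
  have p12: "assoc d1 d2 X Y Z + assoc d2 d1 X Y Z = assoc d1 d2 Y X Z + assoc d2 d1 Y X Z"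
    if GG: "X \<in> ?G" "Y \<in> ?G" "Z \<in> ?G" for X Y Z
  proof -
    obtain x a y b z c where X: "X = tp x a" and Y: "Y = tp y b" and Z: "Z = tp z c"
      using GG by blast
    have w': "circ (br y x) z = - circ (br x y) z" using A6 .
    have q1: "dm a (od b c) = od (dm a b) c - od (dm b a) c + od b (dm a c)"
      using B3[of a b c] obr by (simp add: algebra_simps)
    have q2: "dm b (od a c) = od (dm b a) c - od (dm a b) c + od a (dm b c)"
      using B3[of b a c] obr by (simp add: algebra_simps)
    have q3: "dm (od b a) c = od a (dm b c) + od b (dm a c) - dm (od a b) c"
      using B4[of a b c] dbr by (simp add: algebra_simps)
    show ?thesis unfolding X Y Z assoc_def d2_def d1_def A4 A5 w' q1 q2 q3
      by (simp add: tpr algebra_simps)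
  qed
  have P12: "assoc d1 d2 X Y Z + assoc d2 d1 X Y Z = assoc d1 d2 Y X Z + assoc d2 d1 Y X Z" for X Y Z
    using ext_sym[OF vsT sp d1_bil d2_bil d2_bil d1_bil, of X Y Z] p12 by simp
  have PL1: "pre_Lie sT d1" unfolding pre_Lie_def using vsT d1_bil P1 unfolding assoc_def by blast
  have PL2: "pre_Lie sT d2" unfolding pre_Lie_def using vsT d2_bil P2 unfolding assoc_def by blast
  have PLc: "pre_Lie sT (\<lambda>x y. sT k1 (d1 x y) + sT k2 (d2 x y))" for k1 k2
    by (rule comb[OF vsT d1_bil d2_bil P1 P2 P12])
  have CPL: "compatible_pre_Lie sT d1 d2"
    unfolding compatible_pre_Lie_def using PL1 PL2 PLc by blast
  interpret v: vector_space sT by (rule vsT)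
  have eqf: "(\<lambda>x y. sT k1 (d1 x y - d1 y x) + sT k2 (d2 x y - d2 y x)) =
     (\<lambda>x y. (sT k1 (d1 x y) + sT k2 (d2 x y)) - (sT k1 (d1 y x) + sT k2 (d2 y x)))" for k1 k2
    by (simp add: algebra_simps)
  have CL: "compatible_Lie sT (\<lambda>X Y. d1 X Y - d1 Y X) (\<lambda>X Y. d2 X Y - d2 Y X)"
    unfolding compatible_Lie_def using preLie_Lie[OF PL1] preLie_Lie[OF PL2]
      preLie_Lie[OF PLc] eqf by auto
  show ?thesis using PL1 PL2 CPL CL by blast
qed

end
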